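(* Let $S$ be a set and $n\le N$ positive integers. For every $\mu\in\mathscr N_n(S)$ there exist real numbers $c(\mu,\nu)$, $\nu\in\mathscr N_N(S)$, all but finitely many equal to zero, such that \[ u^n_{n,\mu}=\sum_{\nu\in\mathscr N_N(S)}c(\mu,\nu)\,u^N_{n,\nu}. \] Moreover (for these coefficients) there exists $K>0$, depending on $n$ and $N$, such that $\sup_{\mu\in\mathscr N_n(S)}\sum_{\nu\in\mathscr N_N(S)}|c(\mu,\nu)|<K$.
   Context: A point measure on $S$ is a measure on all subsets of $S$ of the form $\sum_{i=1}^d c_i\delta_{a_i}$ with $c_i$ nonnegative integers and $a_i\in S$; $\mathscr N_N(S)$ is the set of point measures of total mass $N$. For $x=(x_1,\ldots,x_N)\in S^N$ its type is $\epsilon_x=\sum_{i=1}^N\delta_{x_i}$, and for $\nu\in\mathscr N_N(S)$, $S^N(\nu)=\{x\in S^N:\epsilon_x=\nu\}$ (a finite set). $u_{N,\nu}$ is the uniform probability measure on $S^N(\nu)$, and $u^N_{n,\nu}$ is the image of $u_{N,\nu}$ under the projection $(x_1,\ldots,x_N)\mapsto(x_1,\ldots,x_n)$; these are finitely supported probability measures on $S^n$ (defined on all subsets). *)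

theory Defs
  imports "HOL-Probability.Probability" "HOL-Library.Multiset"
begin

text \<open>Point measures of total mass N on S, represented as multisets over S.\<close>
definition point_measures :: "'a set \<Rightarrow> nat \<Rightarrow> 'a multiset set" where
  "point_measures S N = {\<nu>. set_mset \<nu> \<subseteq> S \<and> size \<nu> = N}"

definition tuples_of_type :: "nat \<Rightarrow> 'a multiset \<Rightarrow> 'a list set" where
  "tuples_of_type N \<nu> = {x. length x = N \<and> mset x = \<nu>}"

definition proj_unif :: "nat \<Rightarrow> nat \<Rightarrow> 'a multiset \<Rightarrow> 'a list pmf" where
  "proj_unif N n \<nu> = map_pmf (take n) (pmf_of_set (tuples_of_type N \<nu>))"

end

theory Submission
  imports Defs "HOL-Combinatorics.Multiset_Permutations"
begin

lemma lin_comb: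
  fixes w :: "'i \<Rightarrow> real" and f :: "'i \<Rightarrow> 'x \<Rightarrow> real" and g :: "'b \<Rightarrow> 'x \<Rightarrow> real"
  assumes I: "finite I" and F: "\<And>i. i\<in>I \<Longrightarrow> finite (F i)"
    and rep: "\<And>i x. i\<in>I \<Longrightarrow> f i x = (\<Sum>\<nu>\<in>F i. d i \<nu> * g \<nu> x)"
  shows "(\<Sum>i\<in>I. w i * f i x) = (\<Sum>\<nu>\<in>(\<Union>i\<in>I. F i). (\<Sum>i\<in>I. w i * (if \<nu> \<in> F i then d i \<nu> else 0)) * g \<nu> x)"
    "(\<Sum>\<nu>\<in>(\<Union>i\<in>I. F i). \<bar>\<Sum>i\<in>I. w i * (if \<nu> \<in> F i then d i \<nu> else 0)\<bar>) \<le> (\<Sum>i\<in>I. \<bar>w i\<bar> * (\<Sum>\<nu>\<in>F i. \<bar>d i \<nu>\<bar>))"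
proof -
  let ?U = "\<Union>i\<in>I. F i"
  have U: "finite ?U" using I F by auto
  have r: "(\<Sum>\<nu>\<in>?U. (if \<nu> \<in> F i then h \<nu> else 0)) = (\<Sum>\<nu>\<in>F i. h \<nu>)" if "i \<in> I" for i and h :: "'b \<Rightarrow> real"
  proof -
    have "(\<Sum>\<nu>\<in>?U. (if \<nu> \<in> F i then h \<nu> else 0)) = (\<Sum>\<nu>\<in>?U \<inter> F i. h \<nu>)"
      using sum.inter_restrict[OF U, of h "F i"] by simp
    also have "?U \<inter> F i = F i" using that by auto
    finally show ?thesis .
  qed
  have "(\<Sum>\<nu>\<in>?U. (\<Sum>i\<in>I. w i * (if \<nu> \<in> F i then d i \<nu> else 0)) * g \<nu> x)
      = (\<Sum>\<nu>\<in>?U. \<Sum>i\<in>I. w i * (if \<nu> \<in> F i then d i \<nu> * g \<nu> x else 0))"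
    by (simp add: sum_distrib_right mult.assoc) (intro sum.cong refl, simp)
  also have "\<dots> = (\<Sum>i\<in>I. w i * (\<Sum>\<nu>\<in>?U. (if \<nu> \<in> F i then d i \<nu> * g \<nu> x else 0)))"
    by (subst sum.swap) (simp add: sum_distrib_left)
  also have "\<dots> = (\<Sum>i\<in>I. w i * f i x)"
    by (rule sum.cong) (simp_all add: r rep)
  finally show "(\<Sum>i\<in>I. w i * f i x) = (\<Sum>\<nu>\<in>?U. (\<Sum>i\<in>I. w i * (if \<nu> \<in> F i then d i \<nu> else 0)) * g \<nu> x)" by simp
  have "(\<Sum>\<nu>\<in>?U. \<bar>\<Sum>i\<in>I. w i * (if \<nu> \<in> F i then d i \<nu> else 0)\<bar>)
     \<le> (\<Sum>\<nu>\<in>?U. \<Sum>i\<in>I. \<bar>w i\<bar> * (if \<nu> \<in> F i then \<bar>d i \<nu>\<bar> else 0))"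
    by (rule sum_mono) (rule order_trans[OF sum_abs], simp add: abs_mult, rule sum_mono, simp)
  also have "\<dots> = (\<Sum>i\<in>I. \<bar>w i\<bar> * (\<Sum>\<nu>\<in>?U. (if \<nu> \<in> F i then \<bar>d i \<nu>\<bar> else 0)))"
    by (subst sum.swap) (simp add: sum_distrib_left)
  also have "\<dots> = (\<Sum>i\<in>I. \<bar>w i\<bar> * (\<Sum>\<nu>\<in>F i. \<bar>d i \<nu>\<bar>))"
    by (rule sum.cong) (simp_all add: r)
  finally show "(\<Sum>\<nu>\<in>?U. \<bar>\<Sum>i\<in>I. w i * (if \<nu> \<in> F i then d i \<nu> else 0)\<bar>) \<le> (\<Sum>i\<in>I. \<bar>w i\<bar> * (\<Sum>\<nu>\<in>F i. \<bar>d i \<nu>\<bar>))" .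
qed

lemma tuples_perm: "size \<mu> = m \<Longrightarrow> tuples_of_type m \<mu> = permutations_of_multiset \<mu>"
  by (auto simp: tuples_of_type_def permutations_of_multiset_def)

lemma proj_take: "n \<le> M \<Longrightarrow> measure_pmf.prob (proj_unif N M \<nu>) (take n -` A) = measure_pmf.prob (proj_unif N n \<nu>) A"
  by (simp add: proj_unif_def vimage_def min_def)

lemma size_sum_count: "size M = (\<Sum>x\<in>set_mset M. count M x)"
  by (simp add: size_multiset_overloaded_eq)

lemma prob_perm: "size \<mu> = m \<Longrightarrow> measure_pmf.prob (proj_unif m k \<mu>) A
   = card (permutations_of_multiset \<mu> \<inter> take k -` A) / card (permutations_of_multiset \<mu>)"
  by (simp add: proj_unif_def tuples_perm measure_pmf_of_set)

lemma step_id: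
  assumes "size \<nu> = Suc m"
  shows "measure_pmf.prob (proj_unif (Suc m) m \<nu>) A =
     (\<Sum>b\<in>set_mset \<nu>. (real (count \<nu> b) / real (Suc m)) * measure_pmf.prob (proj_unif m m (\<nu> - {#b#})) A)"
proof -
  let ?P = permutations_of_multiset
  have seteq: "?P \<nu> \<inter> take m -` A = (\<Union>b\<in>set_mset \<nu>. (\<lambda>xs. xs @ [b]) ` (?P (\<nu> - {#b#}) \<inter> A))"
  proof safe
    fix ys assume ys: "ys \<in> ?P \<nu>" "take m ys \<in> A"
    then have len: "length ys = Suc m" using assms by (auto simp: permutations_of_multiset_def)
    then have "ys \<noteq> []" by auto
    then have e: "ys = butlast ys @ [last ys]" by simp
    have "mset ys = \<nu>" using ys by (simp add: permutations_of_multiset_def)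
    then have "last ys \<in># \<nu>" using \<open>ys \<noteq> []\<close> by auto
    moreover have "mset (butlast ys) = \<nu> - {#last ys#}"
      using \<open>mset ys = \<nu>\<close> e by (metis add_mset_remove_trivial mset.simps(2) mset_rev rev.simps(2) rev_rev_ident)
    moreover have "take m ys = butlast ys" using len by (simp add: butlast_conv_take)
    ultimately show "ys \<in> (\<Union>b\<in>set_mset \<nu>. (\<lambda>xs. xs @ [b]) ` (?P (\<nu> - {#b#}) \<inter> A))"
      using ys e by (auto simp: permutations_of_multiset_def intro!: bexI[of _ "last ys"] image_eqI[of _ _ "butlast ys"])
  next
    fix b xs assume "b \<in># \<nu>" "xs \<in> ?P (\<nu> - {#b#})"
    then show "xs @ [b] \<in> ?P \<nu>" by (simp add: permutations_of_multiset_def)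
  next
    fix b xs assume "b \<in># \<nu>" "xs \<in> ?P (\<nu> - {#b#})" "xs \<in> A"
    then have "length xs = m" using assms
      by (metis diff_Suc_1 permutations_of_multisetD size_Diff_singleton size_mset)
    then show "xs @ [b] \<in> take m -` A" using \<open>xs \<in> A\<close> by simp
  qed
  have cardeq: "card (?P \<nu> \<inter> take m -` A) = (\<Sum>b\<in>set_mset \<nu>. card (?P (\<nu> - {#b#}) \<inter> A))"
    unfolding seteq
    by (subst card_UN_disjoint) (auto simp: card_image inj_on_def)
  have e2: "?P (\<nu> - {#b#}) \<inter> take m -` A = ?P (\<nu> - {#b#}) \<inter> A" if "b \<in># \<nu>" for b
  proof -
    have "length x = m" if "x \<in> ?P (\<nu> - {#b#})" for x
      using that \<open>b \<in># \<nu>\<close> assms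
      by (metis diff_Suc_1 permutations_of_multisetD size_Diff_singleton size_mset)
    then show ?thesis by auto
  qed
  have ratio: "real (count \<nu> b) / real (Suc m) * (card (?P (\<nu> - {#b#}) \<inter> A) / card (?P (\<nu> - {#b#})))
     = card (?P (\<nu> - {#b#}) \<inter> A) / card (?P \<nu>)" if "b \<in># \<nu>" for b
  proof -
    have r: "real (card (?P \<nu>)) * real (count \<nu> b) = real (Suc m) * real (card (?P (\<nu> - {#b#})))"
      using card_permutations_of_multiset_remove_aux[OF that] assms by (metis of_nat_mult)
    have p1: "real (card (?P \<nu>)) > 0" "real (card (?P (\<nu> - {#b#}))) > 0"
      by (simp_all add: card_gt_0_iff)
    have gen: "c / s * (x / q) = x / p" if "p * c = s * q" "p > 0" "q > 0" "s > 0" for p c s q x :: real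
      using that by (simp add: field_simps)
    show ?thesis using gen[OF r p1] by simp
  qed
  have "measure_pmf.prob (proj_unif (Suc m) m \<nu>) A = card (?P \<nu> \<inter> take m -` A) / card (?P \<nu>)"
    using assms by (simp add: prob_perm)
  also have "\<dots> = (\<Sum>b\<in>set_mset \<nu>. card (?P (\<nu> - {#b#}) \<inter> A) / card (?P \<nu>))"
    unfolding cardeq by (simp add: sum_divide_distrib)
  also have "\<dots> = (\<Sum>b\<in>set_mset \<nu>. (real (count \<nu> b) / real (Suc m)) * measure_pmf.prob (proj_unif m m (\<nu> - {#b#})) A)"
  proof (rule sum.cong[OF refl])
    fix b assume b: "b \<in># \<nu>"
    have "size (\<nu> - {#b#}) = m" using b assms by (simp add: size_Diff_submset)
    then show "card (?P (\<nu> - {#b#}) \<inter> A) / card (?P \<nu>) = (real (count \<nu> b) / real (Suc m)) * measure_pmf.prob (proj_unif m m (\<nu> - {#b#})) A"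
      using ratio[OF b] e2[OF b] by (simp add: prob_perm)
  qed
  finally show ?thesis .
qed

definition rep :: "'a set \<Rightarrow> nat \<Rightarrow> ('a list set \<Rightarrow> real) \<Rightarrow> ('a multiset \<Rightarrow> 'a list set \<Rightarrow> real) \<Rightarrow> real \<Rightarrow> bool" where
  "rep S M p q B \<longleftrightarrow> (\<exists>F d. finite F \<and> F \<subseteq> point_measures S M \<and>
      (\<forall>A. p A = (\<Sum>\<nu>\<in>F. d \<nu> * q \<nu> A)) \<and> (\<Sum>\<nu>\<in>F. \<bar>d \<nu>\<bar>) \<le> B)"

lemma step_rep:
  fixes m :: nat and \<mu> :: "'a multiset" and X :: real
  assumes sz: "size \<mu> = m" and S: "set_mset \<mu> \<subseteq> S" and a: "a \<in> S" and X: "X \<ge> 1"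
    and IH: "\<And>b. b \<in> set_mset \<mu> - {a} \<Longrightarrow>
      rep S (Suc m) (\<lambda>A. measure_pmf.prob (proj_unif m m (add_mset a \<mu> - {#b#})) A)
                    (\<lambda>\<nu> A. measure_pmf.prob (proj_unif (Suc m) m \<nu>) A) X"
  shows "rep S (Suc m) (\<lambda>A. measure_pmf.prob (proj_unif m m \<mu>) A)
                    (\<lambda>\<nu> A. measure_pmf.prob (proj_unif (Suc m) m \<nu>) A) ((2*m+2) * X)"
proof -
  define Q where "Q = (\<lambda>(\<mu>::'a multiset) A. measure_pmf.prob (proj_unif m m \<mu>) A)"
  define G where "G = (\<lambda>(\<nu>::'a multiset) A. measure_pmf.prob (proj_unif (Suc m) m \<nu>) A)"
  define \<nu>0 where "\<nu>0 = add_mset a \<mu>"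
  define B where "B = set_mset \<mu> - {a}"
  define c where "c = real (count \<mu> a) + 1"
  have c: "c \<ge> 1" by (simp add: c_def)
  have finB: "finite B" by (simp add: B_def)
  have aB: "a \<notin> B" by (simp add: B_def)
  have setnu: "set_mset \<nu>0 = insert a B" by (auto simp: \<nu>0_def B_def)
  have "\<forall>b\<in>B. \<exists>Fd. finite (fst Fd) \<and> fst Fd \<subseteq> point_measures S (Suc m) \<and>
      (\<forall>A. Q (\<nu>0 - {#b#}) A = (\<Sum>\<nu>\<in>fst Fd. snd Fd \<nu> * G \<nu> A)) \<and> (\<Sum>\<nu>\<in>fst Fd. \<bar>snd Fd \<nu>\<bar>) \<le> X"
  proof
    fix b assume "b \<in> B"
    from IH[of b] this obtain F d where "finite F \<and> F \<subseteq> point_measures S (Suc m) \<and>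
      (\<forall>A. Q (\<nu>0 - {#b#}) A = (\<Sum>\<nu>\<in>F. d \<nu> * G \<nu> A)) \<and> (\<Sum>\<nu>\<in>F. \<bar>d \<nu>\<bar>) \<le> X"
      unfolding rep_def B_def Q_def G_def \<nu>0_def by blast
    then show "\<exists>Fd. finite (fst Fd) \<and> fst Fd \<subseteq> point_measures S (Suc m) \<and>
      (\<forall>A. Q (\<nu>0 - {#b#}) A = (\<Sum>\<nu>\<in>fst Fd. snd Fd \<nu> * G \<nu> A)) \<and> (\<Sum>\<nu>\<in>fst Fd. \<bar>snd Fd \<nu>\<bar>) \<le> X"
      by (intro exI[of _ "(F, d)"]) simp
  qed
  from bchoice[OF this] obtain Fd where Fd0: "\<forall>b\<in>B. finite (fst (Fd b)) \<and> fst (Fd b) \<subseteq> point_measures S (Suc m) \<and>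
      (\<forall>A. Q (\<nu>0 - {#b#}) A = (\<Sum>\<nu>\<in>fst (Fd b). snd (Fd b) \<nu> * G \<nu> A)) \<and> (\<Sum>\<nu>\<in>fst (Fd b). \<bar>snd (Fd b) \<nu>\<bar>) \<le> X" ..
  note Fd = bspec[OF Fd0]
  define I where "I = insert None (Some ` B)"
  define FF where "FF = (\<lambda>i. case i of None \<Rightarrow> {\<nu>0} | Some b \<Rightarrow> fst (Fd b))"
  define dd where "dd = (\<lambda>i. case i of None \<Rightarrow> (\<lambda>_. 1) | Some b \<Rightarrow> snd (Fd b))"
  define ff where "ff = (\<lambda>i. case i of None \<Rightarrow> G \<nu>0 | Some b \<Rightarrow> Q (\<nu>0 - {#b#}))"
  define w where "w = (\<lambda>i. case i of None \<Rightarrow> real (Suc m) / c | Some b \<Rightarrow> - real (count \<mu> b) / c)"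
  have finI: "finite I" using finB by (simp add: I_def)
  have finF: "\<And>i. i \<in> I \<Longrightarrow> finite (FF i)" using Fd by (auto simp: I_def FF_def)
  have repF: "\<And>i A. i \<in> I \<Longrightarrow> ff i A = (\<Sum>\<nu>\<in>FF i. dd i \<nu> * G \<nu> A)"
    using Fd by (auto simp: I_def FF_def ff_def dd_def)
  note L = lin_comb[where I=I and F=FF and f=ff and d=dd and g=G and w=w, OF finI finF repF]
  have key: "Q \<mu> A = (\<Sum>i\<in>I. w i * ff i A)" for A
  proof -
    have "G \<nu>0 A = (\<Sum>b\<in>set_mset \<nu>0. (real (count \<nu>0 b) / real (Suc m)) * Q (\<nu>0 - {#b#}) A)"
      unfolding G_def Q_def by (rule step_id) (simp add: \<nu>0_def sz)
    also have "\<dots> = (\<Sum>b\<in>insert a B. (real (count \<nu>0 b) / real (Suc m)) * Q (\<nu>0 - {#b#}) A)"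
      by (simp only: setnu)
    also have "\<dots> = (real (count \<nu>0 a) / real (Suc m)) * Q (\<nu>0 - {#a#}) A + (\<Sum>b\<in>B. (real (count \<nu>0 b) / real (Suc m)) * Q (\<nu>0 - {#b#}) A)"
      by (rule sum.insert[OF finB aB])
    also have "(\<Sum>b\<in>B. (real (count \<nu>0 b) / real (Suc m)) * Q (\<nu>0 - {#b#}) A) = (\<Sum>b\<in>B. (real (count \<mu> b) / real (Suc m)) * Q (\<nu>0 - {#b#}) A)"
      by (rule sum.cong) (auto simp: \<nu>0_def B_def)
    also have "(real (count \<nu>0 a) / real (Suc m)) * Q (\<nu>0 - {#a#}) A = c / real (Suc m) * Q \<mu> A"
      by (simp add: \<nu>0_def c_def)
    finally have e: "G \<nu>0 A = c / real (Suc m) * Q \<mu> A + (\<Sum>b\<in>B. (real (count \<mu> b) / real (Suc m)) * Q (\<nu>0 - {#b#}) A)" .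
    have "(\<Sum>i\<in>I. w i * ff i A) = real (Suc m) / c * G \<nu>0 A + (\<Sum>b\<in>B. - real (count \<mu> b) / c * Q (\<nu>0 - {#b#}) A)"
      using finB by (simp add: I_def sum.reindex w_def ff_def)
    also have "\<dots> = Q \<mu> A + ((\<Sum>b\<in>B. real (Suc m) / c * ((real (count \<mu> b) / real (Suc m)) * Q (\<nu>0 - {#b#}) A)) + (\<Sum>b\<in>B. - real (count \<mu> b) / c * Q (\<nu>0 - {#b#}) A))"
      unfolding e using c by (simp add: distrib_left sum_distrib_left)
    also have "(\<Sum>b\<in>B. real (Suc m) / c * ((real (count \<mu> b) / real (Suc m)) * Q (\<nu>0 - {#b#}) A)) + (\<Sum>b\<in>B. - real (count \<mu> b) / c * Q (\<nu>0 - {#b#}) A) = 0"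
      by (simp add: sum.distrib[symmetric])
    finally show ?thesis by simp
  qed
  have sub: "(\<Union>i\<in>I. FF i) \<subseteq> point_measures S (Suc m)"
  proof -
    have "\<nu>0 \<in> point_measures S (Suc m)" using S a sz by (auto simp: point_measures_def \<nu>0_def)
    then show ?thesis using Fd by (auto simp: I_def FF_def)
  qed
  have cntB: "(\<Sum>b\<in>B. real (count \<mu> b)) \<le> real m"
  proof -
    have "(\<Sum>b\<in>B. count \<mu> b) \<le> (\<Sum>b\<in>set_mset \<mu>. count \<mu> b)"
      by (rule sum_mono2) (auto simp: B_def)
    also have "\<dots> = m" using sz size_sum_count[of \<mu>] by simp
    finally show ?thesis by (metis of_nat_le_iff of_nat_sum)
  qed
  have bnd: "(\<Sum>i\<in>I. \<bar>w i\<bar> * (\<Sum>\<nu>\<in>FF i. \<bar>dd i \<nu>\<bar>)) \<le> (2*m+2) * X"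
  proof -
    have "(\<Sum>i\<in>I. \<bar>w i\<bar> * (\<Sum>\<nu>\<in>FF i. \<bar>dd i \<nu>\<bar>)) =
        real (Suc m) / c + (\<Sum>b\<in>B. real (count \<mu> b) / c * (\<Sum>\<nu>\<in>fst (Fd b). \<bar>snd (Fd b) \<nu>\<bar>))"
      using finB c by (simp add: I_def sum.reindex w_def FF_def dd_def abs_div)
    also have "\<dots> \<le> real (Suc m) + (\<Sum>b\<in>B. real (count \<mu> b) * X)"
    proof (rule add_mono)
      show "real (Suc m) / c \<le> real (Suc m)" using c by (simp add: divide_le_eq)
      show "(\<Sum>b\<in>B. real (count \<mu> b) / c * (\<Sum>\<nu>\<in>fst (Fd b). \<bar>snd (Fd b) \<nu>\<bar>)) \<le> (\<Sum>b\<in>B. real (count \<mu> b) * X)"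
      proof (rule sum_mono)
        fix b assume b: "b \<in> B"
        have "real (count \<mu> b) / c \<le> real (count \<mu> b)" using c mult_left_mono[OF c, of "real (count \<mu> b)"] by (simp add: divide_le_eq)
        moreover have "(\<Sum>\<nu>\<in>fst (Fd b). \<bar>snd (Fd b) \<nu>\<bar>) \<le> X" using Fd[OF b] by simp
        ultimately show "real (count \<mu> b) / c * (\<Sum>\<nu>\<in>fst (Fd b). \<bar>snd (Fd b) \<nu>\<bar>) \<le> real (count \<mu> b) * X"
          using c by (intro mult_mono) (auto intro: sum_nonneg)
      qed
    qed
    also have "\<dots> = real (Suc m) + (\<Sum>b\<in>B. real (count \<mu> b)) * X" by (simp add: sum_distrib_right)
    also have "\<dots> \<le> real (Suc m) * X + real m * X"
      using cntB X by (intro add_mono mult_right_mono) auto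
    also have "\<dots> \<le> (2*m+2) * X" using X by (simp add: algebra_simps)
    finally show ?thesis .
  qed
  show ?thesis unfolding rep_def
  proof (intro exI conjI allI)
    show "finite (\<Union>i\<in>I. FF i)" using finI finF by auto
    show "(\<Union>i\<in>I. FF i) \<subseteq> point_measures S (Suc m)" by (rule sub)
    fix A
    show "measure_pmf.prob (proj_unif m m \<mu>) A = (\<Sum>\<nu>\<in>(\<Union>i\<in>I. FF i). (\<Sum>i\<in>I. w i * (if \<nu> \<in> FF i then dd i \<nu> else 0)) * measure_pmf.prob (proj_unif (Suc m) m \<nu>) A)"
      using key[of A] L(1)[where x=A] by (simp add: Q_def G_def)
  next
    show "(\<Sum>\<nu>\<in>(\<Union>i\<in>I. FF i). \<bar>\<Sum>i\<in>I. w i * (if \<nu> \<in> FF i then dd i \<nu> else 0)\<bar>) \<le> real (2 * m + 2) * X"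
      using L(2) bnd by linarith
  qed
qed

lemma rep_mono: "rep S M p q B \<Longrightarrow> B \<le> B' \<Longrightarrow> rep S M p q B'"
  unfolding rep_def by (meson order_trans)

lemma count_lt_size: "b \<in># \<mu> \<Longrightarrow> b \<noteq> a \<Longrightarrow> count \<mu> a < size \<mu>"
proof -
  assume "b \<in># \<mu>" "b \<noteq> a"
  then obtain M where M: "\<mu> = add_mset b M" using multi_member_split by metis
  have "count M a \<le> size M" by (rule count_le_size)
  then show ?thesis using M \<open>b \<noteq> a\<close> by simp
qed

lemma inner_k:
  fixes a :: 'a and S :: "'a set"
  assumes a: "a \<in> S"
  shows "\<forall>\<mu>. size \<mu> = m \<longrightarrow> set_mset \<mu> \<subseteq> S \<longrightarrow> m - count \<mu> a = k \<longrightarrow>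
    rep S (Suc m) (\<lambda>A. measure_pmf.prob (proj_unif m m \<mu>) A)
                    (\<lambda>\<nu> A. measure_pmf.prob (proj_unif (Suc m) m \<nu>) A) (real (2*m+2) ^ Suc k)"
proof (induction k rule: less_induct)
  case (less k)
  show ?case
  proof (intro allI impI)
    fix \<mu> :: "'a multiset" assume sz: "size \<mu> = m" and S: "set_mset \<mu> \<subseteq> S" and k: "m - count \<mu> a = k"
    have X: "(1::real) \<le> real (2*m+2) ^ k" by (simp add: one_le_power)
    have "rep S (Suc m) (\<lambda>A. measure_pmf.prob (proj_unif m m \<mu>) A)
                    (\<lambda>\<nu> A. measure_pmf.prob (proj_unif (Suc m) m \<nu>) A) ((2*m+2) * (real (2*m+2) ^ k))"
    proof (rule step_rep[OF sz S a X])
      fix b assume b: "b \<in> set_mset \<mu> - {a}"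
      have lt: "count \<mu> a < m" using count_lt_size[of b \<mu> a] b sz by auto
      define k' where "k' = m - count (add_mset a \<mu> - {#b#}) a"
      have k'k: "k' < k" using b lt k by (auto simp: k'_def)
      have sz': "size (add_mset a \<mu> - {#b#}) = m" using b sz size_eq_0_iff_empty[of \<mu>] by (auto simp: size_Diff_singleton nonempty_has_size Suc_pred)
      have S': "set_mset (add_mset a \<mu> - {#b#}) \<subseteq> S" using S a by (auto dest!: in_diffD)
      have r: "rep S (Suc m) (\<lambda>A. measure_pmf.prob (proj_unif m m (add_mset a \<mu> - {#b#})) A)
                    (\<lambda>\<nu> A. measure_pmf.prob (proj_unif (Suc m) m \<nu>) A) (real (2*m+2) ^ Suc k')"
        using less[OF k'k] sz' S' k'_def by blast
      show "rep S (Suc m) (\<lambda>A. measure_pmf.prob (proj_unif m m (add_mset a \<mu> - {#b#})) A)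
                    (\<lambda>\<nu> A. measure_pmf.prob (proj_unif (Suc m) m \<nu>) A) (real (2*m+2) ^ k)"
        by (rule rep_mono[OF r]) (rule power_increasing, use k'k in auto)
    qed
    then show "rep S (Suc m) (\<lambda>A. measure_pmf.prob (proj_unif m m \<mu>) A)
                    (\<lambda>\<nu> A. measure_pmf.prob (proj_unif (Suc m) m \<nu>) A) (real (2*m+2) ^ Suc k)"
      by simp
  qed
qed

lemma inner_rep:
  assumes sz: "size \<mu> = m" and m1: "1 \<le> m" and S: "set_mset \<mu> \<subseteq> S" and mN: "m \<le> N"
  shows "rep S (Suc m) (\<lambda>A. measure_pmf.prob (proj_unif m m \<mu>) A)
                    (\<lambda>\<nu> A. measure_pmf.prob (proj_unif (Suc m) m \<nu>) A) (real (2*N+2) ^ Suc N)"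
proof -
  have "\<mu> \<noteq> {#}" using sz m1 by auto
  then obtain a where a: "a \<in># \<mu>" by blast
  then have aS: "a \<in> S" using S by auto
  have r: "rep S (Suc m) (\<lambda>A. measure_pmf.prob (proj_unif m m \<mu>) A)
                    (\<lambda>\<nu> A. measure_pmf.prob (proj_unif (Suc m) m \<nu>) A) (real (2*m+2) ^ Suc (m - count \<mu> a))"
    using inner_k[OF aS, of m "m - count \<mu> a"] sz S by blast
  have "real (2*m+2) ^ Suc (m - count \<mu> a) \<le> real (2*N+2) ^ Suc (m - count \<mu> a)"
    using mN by (intro power_mono) auto
  also have "\<dots> \<le> real (2*N+2) ^ Suc N"
    using mN by (intro power_increasing) auto
  finally show ?thesis by (rule rep_mono[OF r])
qed

lemma outer:
  fixes S :: "'a set"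
  assumes n1: "1 \<le> n" and nM: "n \<le> M"
  shows "M \<le> N \<longrightarrow> (\<forall>\<mu>. size \<mu> = n \<longrightarrow> set_mset \<mu> \<subseteq> S \<longrightarrow>
     rep S M (\<lambda>A. measure_pmf.prob (proj_unif n n \<mu>) A) (\<lambda>\<nu> A. measure_pmf.prob (proj_unif M n \<nu>) A)
       ((real (2*N+2) ^ Suc N) ^ (M - n)))"
  using nM
proof (induction M rule: dec_induct)
  case base
  show ?case
  proof (intro impI allI)
    fix \<mu> :: "'a multiset" assume "size \<mu> = n" "set_mset \<mu> \<subseteq> S"
    then show "rep S n (\<lambda>A. measure_pmf.prob (proj_unif n n \<mu>) A) (\<lambda>\<nu> A. measure_pmf.prob (proj_unif n n \<nu>) A)
       ((real (2*N+2) ^ Suc N) ^ (n - n))"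
      unfolding rep_def
      by (intro exI[of _ "{\<mu>}"] exI[of _ "\<lambda>_. 1"]) (auto simp: point_measures_def)
  qed
next
  case (step M)
  define BB where "BB = real (2*N+2) ^ Suc N"
  have BB0: "BB \<ge> 0" by (simp add: BB_def)
  show ?case
  proof (intro impI allI)
    fix \<mu> :: "'a multiset" assume MN: "Suc M \<le> N" and sz: "size \<mu> = n" and S: "set_mset \<mu> \<subseteq> S"
    have "rep S M (\<lambda>A. measure_pmf.prob (proj_unif n n \<mu>) A) (\<lambda>\<nu> A. measure_pmf.prob (proj_unif M n \<nu>) A) (BB ^ (M - n))"
      using step.IH MN sz S unfolding BB_def by simp
    then obtain F c where F: "finite F" "F \<subseteq> point_measures S M"
      and eq: "\<forall>A. measure_pmf.prob (proj_unif n n \<mu>) A = (\<Sum>\<nu>\<in>F. c \<nu> * measure_pmf.prob (proj_unif M n \<nu>) A)"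
      and bd: "(\<Sum>\<nu>\<in>F. \<bar>c \<nu>\<bar>) \<le> BB ^ (M - n)"
      unfolding rep_def by blast
    have "\<forall>\<nu>\<in>F. \<exists>Fd. finite (fst Fd) \<and> fst Fd \<subseteq> point_measures S (Suc M) \<and>
      (\<forall>A. measure_pmf.prob (proj_unif M M \<nu>) A = (\<Sum>\<nu>'\<in>fst Fd. snd Fd \<nu>' * measure_pmf.prob (proj_unif (Suc M) M \<nu>') A))
      \<and> (\<Sum>\<nu>'\<in>fst Fd. \<bar>snd Fd \<nu>'\<bar>) \<le> BB"
    proof
      fix \<nu> assume "\<nu> \<in> F"
      then have "size \<nu> = M" "set_mset \<nu> \<subseteq> S" using F by (auto simp: point_measures_def)
      from inner_rep[OF this(1) _ this(2), of N] MN step.hyps n1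
      obtain F' d where "finite F' \<and> F' \<subseteq> point_measures S (Suc M) \<and>
      (\<forall>A. measure_pmf.prob (proj_unif M M \<nu>) A = (\<Sum>\<nu>'\<in>F'. d \<nu>' * measure_pmf.prob (proj_unif (Suc M) M \<nu>') A))
      \<and> (\<Sum>\<nu>'\<in>F'. \<bar>d \<nu>'\<bar>) \<le> BB"
        unfolding rep_def BB_def by auto
      then show "\<exists>Fd. finite (fst Fd) \<and> fst Fd \<subseteq> point_measures S (Suc M) \<and>
      (\<forall>A. measure_pmf.prob (proj_unif M M \<nu>) A = (\<Sum>\<nu>'\<in>fst Fd. snd Fd \<nu>' * measure_pmf.prob (proj_unif (Suc M) M \<nu>') A))
      \<and> (\<Sum>\<nu>'\<in>fst Fd. \<bar>snd Fd \<nu>'\<bar>) \<le> BB"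
        by (intro exI[of _ "(F', d)"]) simp
    qed
    from bchoice[OF this] obtain Fd where Fd0: "\<forall>\<nu>\<in>F. finite (fst (Fd \<nu>)) \<and> fst (Fd \<nu>) \<subseteq> point_measures S (Suc M) \<and>
      (\<forall>A. measure_pmf.prob (proj_unif M M \<nu>) A = (\<Sum>\<nu>'\<in>fst (Fd \<nu>). snd (Fd \<nu>) \<nu>' * measure_pmf.prob (proj_unif (Suc M) M \<nu>') A))
      \<and> (\<Sum>\<nu>'\<in>fst (Fd \<nu>). \<bar>snd (Fd \<nu>) \<nu>'\<bar>) \<le> BB" ..
    note Fd = bspec[OF Fd0]
    define FF where "FF = (\<lambda>\<nu>. fst (Fd \<nu>))"
    define dd where "dd = (\<lambda>\<nu>. snd (Fd \<nu>))"
    define ff where "ff = (\<lambda>(\<nu>::'a multiset) A. measure_pmf.prob (proj_unif M n \<nu>) A)"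
    define G where "G = (\<lambda>(\<nu>::'a multiset) A. measure_pmf.prob (proj_unif (Suc M) n \<nu>) A)"
    have finF: "\<And>\<nu>. \<nu> \<in> F \<Longrightarrow> finite (FF \<nu>)" using Fd by (simp add: FF_def)
    have repF: "\<And>\<nu> A. \<nu> \<in> F \<Longrightarrow> ff \<nu> A = (\<Sum>\<nu>'\<in>FF \<nu>. dd \<nu> \<nu>' * G \<nu>' A)"
    proof -
      fix \<nu> A assume "\<nu> \<in> F"
      then have "measure_pmf.prob (proj_unif M M \<nu>) (take n -` A) = (\<Sum>\<nu>'\<in>FF \<nu>. dd \<nu> \<nu>' * measure_pmf.prob (proj_unif (Suc M) M \<nu>') (take n -` A))"
        using Fd unfolding FF_def dd_def by blast
      then show "ff \<nu> A = (\<Sum>\<nu>'\<in>FF \<nu>. dd \<nu> \<nu>' * G \<nu>' A)"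
        using step.hyps by (simp add: ff_def G_def proj_take)
    qed
    note L = lin_comb[where I=F and F=FF and f=ff and d=dd and g=G and w=c, OF F(1) finF repF]
    have bnd: "(\<Sum>\<nu>\<in>F. \<bar>c \<nu>\<bar> * (\<Sum>\<nu>'\<in>FF \<nu>. \<bar>dd \<nu> \<nu>'\<bar>)) \<le> BB ^ (Suc M - n)"
    proof -
      have "(\<Sum>\<nu>\<in>F. \<bar>c \<nu>\<bar> * (\<Sum>\<nu>'\<in>FF \<nu>. \<bar>dd \<nu> \<nu>'\<bar>)) \<le> (\<Sum>\<nu>\<in>F. \<bar>c \<nu>\<bar> * BB)"
        by (rule sum_mono, rule mult_left_mono) (use Fd in \<open>auto simp: FF_def dd_def\<close>)
      also have "\<dots> = (\<Sum>\<nu>\<in>F. \<bar>c \<nu>\<bar>) * BB" by (simp add: sum_distrib_right)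
      also have "\<dots> \<le> BB ^ (M - n) * BB" using bd BB0 by (rule mult_right_mono)
      also have "\<dots> = BB ^ (Suc M - n)" using step.hyps by (simp add: Suc_diff_le)
      finally show ?thesis .
    qed
    show "rep S (Suc M) (\<lambda>A. measure_pmf.prob (proj_unif n n \<mu>) A) (\<lambda>\<nu> A. measure_pmf.prob (proj_unif (Suc M) n \<nu>) A)
       ((real (2*N+2) ^ Suc N) ^ (Suc M - n))"
      unfolding rep_def BB_def[symmetric]
    proof (intro exI conjI allI)
      show "finite (\<Union>\<nu>\<in>F. FF \<nu>)" using F(1) finF by auto
      show "(\<Union>\<nu>\<in>F. FF \<nu>) \<subseteq> point_measures S (Suc M)" using Fd by (auto simp: FF_def)
      fix A
      show "measure_pmf.prob (proj_unif n n \<mu>) A = (\<Sum>\<nu>'\<in>(\<Union>\<nu>\<in>F. FF \<nu>). (\<Sum>\<nu>\<in>F. c \<nu> * (if \<nu>' \<in> FF \<nu> then dd \<nu> \<nu>' else 0)) * measure_pmf.prob (proj_unif (Suc M) n \<nu>') A)"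
        using eq L(1)[where x=A] by (simp add: ff_def G_def)
    next
      show "(\<Sum>\<nu>'\<in>(\<Union>\<nu>\<in>F. FF \<nu>). \<bar>\<Sum>\<nu>\<in>F. c \<nu> * (if \<nu>' \<in> FF \<nu> then dd \<nu> \<nu>' else 0)\<bar>) \<le> BB ^ (Suc M - n)"
        using L(2) bnd by linarith
    qed
  qed
qed

lemma supp_sum:
  assumes "finite F" "F \<subseteq> P" "\<And>\<nu>. g \<nu> 0 = (0::real)"
  shows "(\<Sum>\<nu>\<in>{\<nu>\<in>P. (if \<nu> \<in> F then c \<nu> else 0) \<noteq> (0::real)}. g \<nu> (if \<nu> \<in> F then c \<nu> else 0))
       = (\<Sum>\<nu>\<in>F. g \<nu> (c \<nu>))"
proof -
  have "(\<Sum>\<nu>\<in>{\<nu>\<in>P. (if \<nu> \<in> F then c \<nu> else 0) \<noteq> (0::real)}. g \<nu> (if \<nu> \<in> F then c \<nu> else 0))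
      = (\<Sum>\<nu>\<in>F. g \<nu> (if \<nu> \<in> F then c \<nu> else 0))"
    by (rule sum.mono_neutral_left) (use assms in \<open>auto split: if_splits\<close>)
  also have "\<dots> = (\<Sum>\<nu>\<in>F. g \<nu> (c \<nu>))" by simp
  finally show ?thesis .
qed

theorem lemma1:
  fixes n N :: nat
  assumes "1 \<le> n" and "n \<le> N"
  shows "\<exists>K>0. \<forall>S :: 'a set. \<exists>c :: 'a multiset \<Rightarrow> 'a multiset \<Rightarrow> real.
     (\<forall>\<mu>\<in>point_measures S n.
        finite {\<nu>\<in>point_measures S N. c \<mu> \<nu> \<noteq> 0} \<and>
        (\<forall>A. measure_pmf.prob (proj_unif n n \<mu>) A =
              (\<Sum>\<nu>\<in>{\<nu>\<in>point_measures S N. c \<mu> \<nu> \<noteq> 0}.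
                  c \<mu> \<nu> * measure_pmf.prob (proj_unif N n \<nu>) A))) \<and>
     (\<forall>\<mu>\<in>point_measures S n.
        (\<Sum>\<nu>\<in>{\<nu>\<in>point_measures S N. c \<mu> \<nu> \<noteq> 0}. \<bar>c \<mu> \<nu>\<bar>) < K)"
proof -
  define K where "K = (real (2*N+2) ^ Suc N) ^ (N - n) + 1"
  have K0: "K > 0" by (simp add: K_def add_pos_nonneg)
  show ?thesis
  proof (intro exI[of _ K] conjI allI)
    show "K > 0" by (rule K0)
    fix S :: "'a set"
    have "\<forall>\<mu>\<in>point_measures S n. \<exists>Fc. finite (fst Fc) \<and> fst Fc \<subseteq> point_measures S N \<and>
      (\<forall>A. measure_pmf.prob (proj_unif n n \<mu>) A = (\<Sum>\<nu>\<in>fst Fc. snd Fc \<nu> * measure_pmf.prob (proj_unif N n \<nu>) A))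
      \<and> (\<Sum>\<nu>\<in>fst Fc. \<bar>snd Fc \<nu>\<bar>) < K"
    proof
      fix \<mu> assume "\<mu> \<in> point_measures S n"
      then have "size \<mu> = n" "set_mset \<mu> \<subseteq> S" by (auto simp: point_measures_def)
      then have "rep S N (\<lambda>A. measure_pmf.prob (proj_unif n n \<mu>) A) (\<lambda>\<nu> A. measure_pmf.prob (proj_unif N n \<nu>) A)
       ((real (2*N+2) ^ Suc N) ^ (N - n))"
        using outer[OF assms, of N S] by simp
      then obtain F c where Fc1: "finite F" "F \<subseteq> point_measures S N"
        "\<forall>A. measure_pmf.prob (proj_unif n n \<mu>) A = (\<Sum>\<nu>\<in>F. c \<nu> * measure_pmf.prob (proj_unif N n \<nu>) A)"
        "(\<Sum>\<nu>\<in>F. \<bar>c \<nu>\<bar>) \<le> (real (2*N+2) ^ Suc N) ^ (N - n)"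
        unfolding rep_def by blast
      then have "finite F \<and> F \<subseteq> point_measures S N \<and>
        (\<forall>A. measure_pmf.prob (proj_unif n n \<mu>) A = (\<Sum>\<nu>\<in>F. c \<nu> * measure_pmf.prob (proj_unif N n \<nu>) A))
        \<and> (\<Sum>\<nu>\<in>F. \<bar>c \<nu>\<bar>) < K"
      proof -
        have "(\<Sum>\<nu>\<in>F. \<bar>c \<nu>\<bar>) < K" unfolding K_def using Fc1(4) by (rule le_less_trans) simp
        then show ?thesis using Fc1(1-3) by blast
      qed
      then show "\<exists>Fc. finite (fst Fc) \<and> fst Fc \<subseteq> point_measures S N \<and>
      (\<forall>A. measure_pmf.prob (proj_unif n n \<mu>) A = (\<Sum>\<nu>\<in>fst Fc. snd Fc \<nu> * measure_pmf.prob (proj_unif N n \<nu>) A))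
      \<and> (\<Sum>\<nu>\<in>fst Fc. \<bar>snd Fc \<nu>\<bar>) < K"
        by (intro exI[of _ "(F, c)"]) simp
    qed
    from bchoice[OF this] obtain Fc where Fc0: "\<forall>\<mu>\<in>point_measures S n. finite (fst (Fc \<mu>)) \<and> fst (Fc \<mu>) \<subseteq> point_measures S N \<and>
      (\<forall>A. measure_pmf.prob (proj_unif n n \<mu>) A = (\<Sum>\<nu>\<in>fst (Fc \<mu>). snd (Fc \<mu>) \<nu> * measure_pmf.prob (proj_unif N n \<nu>) A))
      \<and> (\<Sum>\<nu>\<in>fst (Fc \<mu>). \<bar>snd (Fc \<mu>) \<nu>\<bar>) < K" ..
    note Fc = bspec[OF Fc0]
    define c where "c = (\<lambda>\<mu> \<nu>. if \<nu> \<in> fst (Fc \<mu>) then snd (Fc \<mu>) \<nu> else 0)"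
    show "\<exists>c :: 'a multiset \<Rightarrow> 'a multiset \<Rightarrow> real.
     (\<forall>\<mu>\<in>point_measures S n.
        finite {\<nu>\<in>point_measures S N. c \<mu> \<nu> \<noteq> 0} \<and>
        (\<forall>A. measure_pmf.prob (proj_unif n n \<mu>) A =
              (\<Sum>\<nu>\<in>{\<nu>\<in>point_measures S N. c \<mu> \<nu> \<noteq> 0}.
                  c \<mu> \<nu> * measure_pmf.prob (proj_unif N n \<nu>) A))) \<and>
     (\<forall>\<mu>\<in>point_measures S n.
        (\<Sum>\<nu>\<in>{\<nu>\<in>point_measures S N. c \<mu> \<nu> \<noteq> 0}. \<bar>c \<mu> \<nu>\<bar>) < K)"
    proof (intro exI[of _ c] conjI ballI allI)
      fix \<mu> assume \<mu>: "\<mu> \<in> point_measures S n"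
      note H = Fc[OF \<mu>]
      show "finite {\<nu>\<in>point_measures S N. c \<mu> \<nu> \<noteq> 0}"
      proof (rule finite_subset)
        show "{\<nu>\<in>point_measures S N. c \<mu> \<nu> \<noteq> 0} \<subseteq> fst (Fc \<mu>)" by (auto simp: c_def split: if_splits)
        show "finite (fst (Fc \<mu>))" using H by blast
      qed
    next
      fix \<mu> A assume \<mu>: "\<mu> \<in> point_measures S n"
      note H = Fc[OF \<mu>]
      have "(\<Sum>\<nu>\<in>{\<nu>\<in>point_measures S N. c \<mu> \<nu> \<noteq> 0}. c \<mu> \<nu> * measure_pmf.prob (proj_unif N n \<nu>) A)
          = (\<Sum>\<nu>\<in>fst (Fc \<mu>). snd (Fc \<mu>) \<nu> * measure_pmf.prob (proj_unif N n \<nu>) A)"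
        unfolding c_def using H
        by (intro supp_sum[where g="\<lambda>\<nu> x. x * measure_pmf.prob (proj_unif N n \<nu>) A"]) auto
      then show "measure_pmf.prob (proj_unif n n \<mu>) A =
              (\<Sum>\<nu>\<in>{\<nu>\<in>point_measures S N. c \<mu> \<nu> \<noteq> 0}. c \<mu> \<nu> * measure_pmf.prob (proj_unif N n \<nu>) A)"
        using H by simp
    next
      fix \<mu> assume \<mu>: "\<mu> \<in> point_measures S n"
      note H = Fc[OF \<mu>]
      have "(\<Sum>\<nu>\<in>{\<nu>\<in>point_measures S N. c \<mu> \<nu> \<noteq> 0}. \<bar>c \<mu> \<nu>\<bar>) = (\<Sum>\<nu>\<in>fst (Fc \<mu>). \<bar>snd (Fc \<mu>) \<nu>\<bar>)"
        unfolding c_def using H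
        by (intro supp_sum[where g="\<lambda>\<nu> x. \<bar>x\<bar>"]) auto
      then show "(\<Sum>\<nu>\<in>{\<nu>\<in>point_measures S N. c \<mu> \<nu> \<noteq> 0}. \<bar>c \<mu> \<nu>\<bar>) < K"
        using H by simp
    qed
  qed
qed

end
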